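(* Let $\mathbf{P}$ be a finite poset with a metric $d_{\mathbf{P}}$ and let $\sigma:\mathbf{P}\to\mathbf{P}$ be a monotone map with $x\le\sigma(x)$ for all $x\in\mathbf{P}$. On $\hat{\mathbf{Q}}=\mathbf{P}\times\{0,1\}$ define $(x,i)\le(y,j)$ iff $\sigma(x)\le y$ when $i\neq j$, and iff $x\le y$ when $i=j$. Write $x_L=(x,0)$, $x_R=(x,1)$. Then: (1) this relation is a preorder on $\hat{\mathbf{Q}}$; (2) for the associated equivalence relation $\sim$ ($u\sim v$ iff $u\le v$ and $v\le u$), the class of $(x,i)$ is $\{x_L,x_R\}$ if $\sigma(x)=x$ and $\{(x,i)\}$ otherwise; let $\mathbf{Q}=\hat{\mathbf{Q}}/\!\sim$ be the quotient poset with classes $[u]$; (3) the maps $g:\mathbf{P}\to\mathbf{Q}$, $g(x)=[x_L]$, and $f:\mathbf{Q}\to\mathbf{P}$, $f([x_L])=x$, $f([x_R])=\sigma(x)$, are well defined and form a Galois insertion $f:\mathbf{Q}\rightleftarrows\mathbf{P}:g$; (4) similarly $i:\mathbf{P}\to\mathbf{Q}$, $i(x)=[x_R]$, and $h:\mathbf{Q}\to\mathbf{P}$, $h([x_L])=\sigma(x)$, $h([x_R])=x$, form a Galois insertion $h:\mathbf{Q}\rightleftarrows\mathbf{P}:i$; (5) for $\mathbf{P}$-modules $M,N$, if $\Gamma$ is a $\mathbf{Q}$-module with $g^*\Gamma\cong M$ and $i^*\Gamma\cong N$, then $(\mathbf{Q},f\dashv g,h\dashv i,\Gamma)$ is a Galois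 coupling of $(M,N)$ with $\mathrm{cost}(\Gamma)=\sup_{x\in\mathbf{P}}d_{\mathbf{P}}(x,\sigma(x))$; in particular, if $M=N\circ\sigma$, then $\Gamma:=h^*N=N\circ h$ gives such a Galois coupling.
   Context: Fix a field $k$; $\mathrm{vect}$ is the category of finite-dimensional $k$-vector spaces. Finite posets are categories with a unique morphism $x\to y$ iff $x\le y$; a $\mathbf{P}$-module is a functor $\mathbf{P}\to\mathrm{vect}$; for a monotone map $g$, $g^*$ is precomposition with $g$. A Galois insertion $f:\mathbf{Q}\rightleftarrows\mathbf{P}:g$ consists of monotone maps $f:\mathbf{Q}\to\mathbf{P}$, $g:\mathbf{P}\to\mathbf{Q}$ with $f(u)\le x\iff u\le g(x)$ for all $u,x$, and $f\circ g=\mathrm{id}_{\mathbf{P}}$. A Galois coupling of $(M,N)$ is $(\mathbf{Q},f\dashv g,h\dashv i,\Gamma)$ with $\mathbf{Q}$ a finite poset, $f:\mathbf{Q}\rightleftarrows\mathbf{P}:g$ and $h:\mathbf{Q}\rightleftarrows\mathbf{P}:i$ Galois insertions, and a $\mathbf{Q}$-module $\Gamma$ with $g^*\Gamma\cong M$, $i^*\Gamma\cong N$; its cost is $\mathrm{cost}(\Gamma)=\sup_{q\in\mathbf{Q}}d_{\mathbf{P}}(f(q),h(q))$. *)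

theory Defs
  imports Complex_Main "Jordan_Normal_Form.Matrix"
begin

(* A finite-dimensional k-vector space is represented (up to iso) by its dimension,
   and a linear map by a matrix; a module over (C, lee) is a pair (dim, mp). *)
type_synonym ('c, 'k) pmodule = "('c \<Rightarrow> nat) \<times> ('c \<Rightarrow> 'c \<Rightarrow> 'k mat)"

definition is_metric :: "('a \<Rightarrow> 'a \<Rightarrow> real) \<Rightarrow> bool" where
  "is_metric d \<longleftrightarrow> (\<forall>x y. 0 \<le> d x y) \<and> (\<forall>x y. d x y = 0 \<longleftrightarrow> x = y)
     \<and> (\<forall>x y. d x y = d y x) \<and> (\<forall>x y z. d x z \<le> d x y + d y z)"

definition preorder_rel :: "('b \<Rightarrow> 'b \<Rightarrow> bool) \<Rightarrow> bool" where
  "preorder_rel r \<longleftrightarrow> (\<forall>u. r u u) \<and> (\<forall>u v w. r u v \<longrightarrow> r v w \<longrightarrow> r u w)"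

definition po_on :: "'b set \<Rightarrow> ('b \<Rightarrow> 'b \<Rightarrow> bool) \<Rightarrow> bool" where
  "po_on C r \<longleftrightarrow> (\<forall>u\<in>C. r u u) \<and> (\<forall>u\<in>C. \<forall>v\<in>C. r u v \<longrightarrow> r v u \<longrightarrow> u = v)
     \<and> (\<forall>u\<in>C. \<forall>v\<in>C. \<forall>w\<in>C. r u v \<longrightarrow> r v w \<longrightarrow> r u w)"

(* the relation on Q^ = P x {0,1}; False = 0 (L), True = 1 (R) *)
definition qhle :: "('a::order \<Rightarrow> 'a) \<Rightarrow> 'a \<times> bool \<Rightarrow> 'a \<times> bool \<Rightarrow> bool" where
  "qhle \<sigma> u v = (if snd u \<noteq> snd v then \<sigma> (fst u) \<le> fst v else fst u \<le> fst v)"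

definition qcls :: "('a::order \<Rightarrow> 'a) \<Rightarrow> 'a \<times> bool \<Rightarrow> ('a \<times> bool) set" where
  "qcls \<sigma> u = {v. qhle \<sigma> u v \<and> qhle \<sigma> v u}"

definition Qset :: "('a::order \<Rightarrow> 'a) \<Rightarrow> ('a \<times> bool) set set" where
  "Qset \<sigma> = range (qcls \<sigma>)"

definition Qle :: "('a::order \<Rightarrow> 'a) \<Rightarrow> ('a \<times> bool) set \<Rightarrow> ('a \<times> bool) set \<Rightarrow> bool" where
  "Qle \<sigma> A B \<longleftrightarrow> (\<exists>u v. A = qcls \<sigma> u \<and> B = qcls \<sigma> v \<and> qhle \<sigma> u v)"

definition gmap :: "('a::order \<Rightarrow> 'a) \<Rightarrow> 'a \<Rightarrow> ('a \<times> bool) set" where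
  "gmap \<sigma> x = qcls \<sigma> (x, False)"

definition imap :: "('a::order \<Rightarrow> 'a) \<Rightarrow> 'a \<Rightarrow> ('a \<times> bool) set" where
  "imap \<sigma> x = qcls \<sigma> (x, True)"

definition fmap :: "('a::order \<Rightarrow> 'a) \<Rightarrow> ('a \<times> bool) set \<Rightarrow> 'a" where
  "fmap \<sigma> A = (THE y. \<exists>x. (A = qcls \<sigma> (x, False) \<and> y = x) \<or> (A = qcls \<sigma> (x, True) \<and> y = \<sigma> x))"

definition hmap :: "('a::order \<Rightarrow> 'a) \<Rightarrow> ('a \<times> bool) set \<Rightarrow> 'a" where
  "hmap \<sigma> A = (THE y. \<exists>x. (A = qcls \<sigma> (x, False) \<and> y = \<sigma> x) \<or> (A = qcls \<sigma> (x, True) \<and> y = x))"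

definition galois_insertion ::
  "'q set \<Rightarrow> ('q \<Rightarrow> 'q \<Rightarrow> bool) \<Rightarrow> ('q \<Rightarrow> 'a::order) \<Rightarrow> ('a \<Rightarrow> 'q) \<Rightarrow> bool" where
  "galois_insertion C leQ f g \<longleftrightarrow>
     (\<forall>x. g x \<in> C)
   \<and> (\<forall>q\<in>C. \<forall>q'\<in>C. leQ q q' \<longrightarrow> f q \<le> f q')
   \<and> (\<forall>x y. x \<le> y \<longrightarrow> leQ (g x) (g y))
   \<and> (\<forall>q\<in>C. \<forall>x. f q \<le> x \<longleftrightarrow> leQ q (g x))
   \<and> (\<forall>x. f (g x) = x)"

definition is_module :: "'c set \<Rightarrow> ('c \<Rightarrow> 'c \<Rightarrow> bool) \<Rightarrow> ('c, 'k::field) pmodule \<Rightarrow> bool" where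
  "is_module C lee M \<longleftrightarrow>
     (\<forall>x\<in>C. snd M x x = 1\<^sub>m (fst M x))
   \<and> (\<forall>x\<in>C. \<forall>y\<in>C. lee x y \<longrightarrow> snd M x y \<in> carrier_mat (fst M y) (fst M x))
   \<and> (\<forall>x\<in>C. \<forall>y\<in>C. \<forall>z\<in>C. lee x y \<longrightarrow> lee y z \<longrightarrow> snd M x z = snd M y z * snd M x y)"

definition mod_iso :: "'c set \<Rightarrow> ('c \<Rightarrow> 'c \<Rightarrow> bool) \<Rightarrow> ('c, 'k::field) pmodule \<Rightarrow> ('c, 'k) pmodule \<Rightarrow> bool" where
  "mod_iso C lee M N \<longleftrightarrow> (\<exists>\<phi>.
      (\<forall>x\<in>C. \<phi> x \<in> carrier_mat (fst N x) (fst M x) \<and> invertible_mat (\<phi> x))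
    \<and> (\<forall>x\<in>C. \<forall>y\<in>C. lee x y \<longrightarrow> \<phi> y * snd M x y = snd N x y * \<phi> x))"

definition pullback :: "('c \<Rightarrow> 'e) \<Rightarrow> ('e, 'k) pmodule \<Rightarrow> ('c, 'k) pmodule" where
  "pullback g M = (fst M \<circ> g, \<lambda>x y. snd M (g x) (g y))"

definition galois_coupling ::
  "'q set \<Rightarrow> ('q \<Rightarrow> 'q \<Rightarrow> bool) \<Rightarrow> ('q \<Rightarrow> 'a::order) \<Rightarrow> ('a \<Rightarrow> 'q) \<Rightarrow> ('q \<Rightarrow> 'a) \<Rightarrow> ('a \<Rightarrow> 'q)
   \<Rightarrow> ('q, 'k::field) pmodule \<Rightarrow> ('a, 'k) pmodule \<Rightarrow> ('a, 'k) pmodule \<Rightarrow> bool" where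
  "galois_coupling C leQ f g h i \<Gamma> M N \<longleftrightarrow>
     finite C \<and> po_on C leQ
   \<and> galois_insertion C leQ f g \<and> galois_insertion C leQ h i
   \<and> is_module C leQ \<Gamma>
   \<and> mod_iso UNIV (\<le>) (pullback g \<Gamma>) M \<and> mod_iso UNIV (\<le>) (pullback i \<Gamma>) N"

definition coupling_cost :: "'q set \<Rightarrow> ('a \<Rightarrow> 'a \<Rightarrow> real) \<Rightarrow> ('q \<Rightarrow> 'a) \<Rightarrow> ('q \<Rightarrow> 'a) \<Rightarrow> real" where
  "coupling_cost C d f h = (SUP q\<in>C. d (f q) (h q))"

end

theory Submission
  imports Defs
begin

context
  fixes \<sigma> :: "'a::{finite,order} \<Rightarrow> 'a"
  assumes mo: "mono \<sigma>" and ex: "\<forall>x. x \<le> \<sigma> x"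
begin

lemma sle: "x \<le> y \<Longrightarrow> \<sigma> x \<le> \<sigma> y" using mo by (simp add: mono_def)
lemma sx: "x \<le> \<sigma> x" using ex by simp

lemma qrefl: "qhle \<sigma> u u" by (simp add: qhle_def)

lemma qtrans: "qhle \<sigma> u v \<Longrightarrow> qhle \<sigma> v w \<Longrightarrow> qhle \<sigma> u w"
proof -
  obtain x i where u: "u = (x,i)" by force
  obtain y j where v: "v = (y,j)" by force
  obtain z k where w: "w = (z,k)" by force
  have a: "x \<le> \<sigma> x" "y \<le> \<sigma> y" "z \<le> \<sigma> z" by (rule sx)+
  have b: "x \<le> y \<Longrightarrow> \<sigma> x \<le> \<sigma> y" "y \<le> z \<Longrightarrow> \<sigma> y \<le> \<sigma> z" by (rule sle, assumption)+
  assume "qhle \<sigma> u v" "qhle \<sigma> v w"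
  then show ?thesis unfolding qhle_def u v w using a b
    by (cases i; cases j; cases k) (auto dest: order_trans)
qed

lemma qcls_eq: "qcls \<sigma> u = qcls \<sigma> v \<longleftrightarrow> qhle \<sigma> u v \<and> qhle \<sigma> v u"
proof
  assume "qcls \<sigma> u = qcls \<sigma> v"
  moreover have "v \<in> qcls \<sigma> v" by (simp add: qcls_def qrefl)
  ultimately have "v \<in> qcls \<sigma> u" by simp
  then show "qhle \<sigma> u v \<and> qhle \<sigma> v u" by (simp add: qcls_def)
next
  assume "qhle \<sigma> u v \<and> qhle \<sigma> v u"
  then show "qcls \<sigma> u = qcls \<sigma> v" unfolding qcls_def using qtrans by blast
qed

lemma qcls_expl: "qcls \<sigma> (x, i) = (if \<sigma> x = x then {(x, False), (x, True)} else {(x, i)})"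
proof -
  have A: "qhle \<sigma> (x,i) (y,j) \<and> qhle \<sigma> (y,j) (x,i) \<longleftrightarrow> y = x \<and> (j = i \<or> \<sigma> x = x)" for y j
  proof -
    have "x \<le> \<sigma> x" "y \<le> \<sigma> y" by (rule sx)+
    then show ?thesis unfolding qhle_def
      by (cases i; cases j) (auto intro: order.antisym order_trans)
  qed
  show ?thesis unfolding qcls_def using A by (cases i) auto
qed

lemma Qle_iff: "Qle \<sigma> (qcls \<sigma> u) (qcls \<sigma> v) \<longleftrightarrow> qhle \<sigma> u v"
proof
  assume "Qle \<sigma> (qcls \<sigma> u) (qcls \<sigma> v)"
  then obtain u' v' where "qcls \<sigma> u = qcls \<sigma> u'" "qcls \<sigma> v = qcls \<sigma> v'" "qhle \<sigma> u' v'"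
    unfolding Qle_def by blast
  then show "qhle \<sigma> u v" unfolding qcls_eq by (meson qtrans)
next
  assume "qhle \<sigma> u v" then show "Qle \<sigma> (qcls \<sigma> u) (qcls \<sigma> v)" unfolding Qle_def by blast
qed

lemma fmap_qcls: "fmap \<sigma> (qcls \<sigma> u) = (if snd u then \<sigma> (fst u) else fst u)"
proof -
  obtain x i where u: "u = (x,i)" by force
  show ?thesis unfolding fmap_def u
  proof (rule the_equality)
    show "\<exists>x'. qcls \<sigma> (x, i) = qcls \<sigma> (x', False) \<and> (if snd (x, i) then \<sigma> (fst (x, i)) else fst (x, i)) = x' \<or>
        qcls \<sigma> (x, i) = qcls \<sigma> (x', True) \<and> (if snd (x, i) then \<sigma> (fst (x, i)) else fst (x, i)) = \<sigma> x'"
      by (cases i) auto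
  next
    fix y assume "\<exists>x'. qcls \<sigma> (x, i) = qcls \<sigma> (x', False) \<and> y = x' \<or> qcls \<sigma> (x, i) = qcls \<sigma> (x', True) \<and> y = \<sigma> x'"
    then show "y = (if snd (x, i) then \<sigma> (fst (x, i)) else fst (x, i))"
      unfolding qcls_expl by (cases i) (auto split: if_splits)
  qed
qed

lemma hmap_qcls: "hmap \<sigma> (qcls \<sigma> u) = (if snd u then fst u else \<sigma> (fst u))"
proof -
  obtain x i where u: "u = (x,i)" by force
  show ?thesis unfolding hmap_def u
  proof (rule the_equality)
    show "\<exists>x'. qcls \<sigma> (x, i) = qcls \<sigma> (x', False) \<and> (if snd (x, i) then fst (x, i) else \<sigma> (fst (x, i))) = \<sigma> x' \<or>
        qcls \<sigma> (x, i) = qcls \<sigma> (x', True) \<and> (if snd (x, i) then fst (x, i) else \<sigma> (fst (x, i))) = x'"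
      by (cases i) auto
  next
    fix y assume "\<exists>x'. qcls \<sigma> (x, i) = qcls \<sigma> (x', False) \<and> y = \<sigma> x' \<or> qcls \<sigma> (x, i) = qcls \<sigma> (x', True) \<and> y = x'"
    then show "y = (if snd (x, i) then fst (x, i) else \<sigma> (fst (x, i)))"
      unfolding qcls_expl by (cases i) (auto split: if_splits)
  qed
qed

lemma po: "po_on (Qset \<sigma>) (Qle \<sigma>)"
  unfolding po_on_def Qset_def by (simp add: Qle_iff qcls_eq qrefl) (meson qtrans)

lemma gi1: "galois_insertion (Qset \<sigma>) (Qle \<sigma>) (fmap \<sigma>) (gmap \<sigma>)"
proof -
  have m: "qhle \<sigma> u v \<Longrightarrow> fmap \<sigma> (qcls \<sigma> u) \<le> fmap \<sigma> (qcls \<sigma> v)" for u v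
    unfolding fmap_qcls qhle_def using sle sx
    by (cases u; cases v) (auto split: if_splits intro: order_trans, metis order_trans sx)
  have a: "fmap \<sigma> (qcls \<sigma> u) \<le> x \<longleftrightarrow> qhle \<sigma> u (x, False)" for u x
    unfolding fmap_qcls qhle_def by (cases u) auto
  show ?thesis unfolding galois_insertion_def Qset_def gmap_def
    using m a by (simp add: Qle_iff)
    (simp add: qhle_def fmap_qcls)
qed

lemma gi2: "galois_insertion (Qset \<sigma>) (Qle \<sigma>) (hmap \<sigma>) (imap \<sigma>)"
proof -
  have m: "qhle \<sigma> u v \<Longrightarrow> hmap \<sigma> (qcls \<sigma> u) \<le> hmap \<sigma> (qcls \<sigma> v)" for u v
    unfolding hmap_qcls qhle_def using sle sx
    by (cases u; cases v) (auto split: if_splits intro: order_trans, metis order_trans sx)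
  have a: "hmap \<sigma> (qcls \<sigma> u) \<le> x \<longleftrightarrow> qhle \<sigma> u (x, True)" for u x
    unfolding hmap_qcls qhle_def by (cases u) auto
  show ?thesis unfolding galois_insertion_def Qset_def imap_def
    using m a by (simp add: Qle_iff)
    (simp add: qhle_def hmap_qcls)
qed

end

lemma mod_iso_refl:
  assumes "is_module C lee M" shows "mod_iso C lee M M"
  unfolding mod_iso_def
proof (intro exI[of _ "\<lambda>x. 1\<^sub>m (fst M x)"] conjI ballI impI)
  fix x assume "x \<in> C"
  show "1\<^sub>m (fst M x) \<in> carrier_mat (fst M x) (fst M x)" by simp
  show "invertible_mat (1\<^sub>m (fst M x))"
    unfolding invertible_mat_def inverts_mat_def by (intro conjI exI[of _ "1\<^sub>m (fst M x)"]) auto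
next
  fix x y assume "x \<in> C" "y \<in> C" "lee x y"
  then have "snd M x y \<in> carrier_mat (fst M y) (fst M x)" using assms unfolding is_module_def by blast
  then show "1\<^sub>m (fst M y) * snd M x y = snd M x y * 1\<^sub>m (fst M x)" by simp
qed

theorem proposition3p10:
  fixes \<sigma> :: "'a::{finite,order} \<Rightarrow> 'a" and d :: "'a \<Rightarrow> 'a \<Rightarrow> real"
  assumes "is_metric d" and "mono \<sigma>" and "\<forall>x. x \<le> \<sigma> x"
  shows "preorder_rel (qhle \<sigma>)
    \<and> (\<forall>x i. qcls \<sigma> (x, i) = (if \<sigma> x = x then {(x, False), (x, True)} else {(x, i)}))
    \<and> finite (Qset \<sigma>) \<and> po_on (Qset \<sigma>) (Qle \<sigma>)
    \<and> (\<forall>u v. Qle \<sigma> (qcls \<sigma> u) (qcls \<sigma> v) \<longleftrightarrow> qhle \<sigma> u v)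
    \<and> (\<forall>x. fmap \<sigma> (qcls \<sigma> (x, False)) = x \<and> fmap \<sigma> (qcls \<sigma> (x, True)) = \<sigma> x)
    \<and> galois_insertion (Qset \<sigma>) (Qle \<sigma>) (fmap \<sigma>) (gmap \<sigma>)
    \<and> (\<forall>x. hmap \<sigma> (qcls \<sigma> (x, False)) = \<sigma> x \<and> hmap \<sigma> (qcls \<sigma> (x, True)) = x)
    \<and> galois_insertion (Qset \<sigma>) (Qle \<sigma>) (hmap \<sigma>) (imap \<sigma>)
    \<and> (\<forall>(M :: ('a, 'k::field) pmodule) (N :: ('a, 'k) pmodule) (\<Gamma> :: (('a \<times> bool) set, 'k) pmodule).
          is_module UNIV (\<le>) M \<and> is_module UNIV (\<le>) N \<and> is_module (Qset \<sigma>) (Qle \<sigma>) \<Gamma>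
          \<and> mod_iso UNIV (\<le>) (pullback (gmap \<sigma>) \<Gamma>) M \<and> mod_iso UNIV (\<le>) (pullback (imap \<sigma>) \<Gamma>) N
          \<longrightarrow> galois_coupling (Qset \<sigma>) (Qle \<sigma>) (fmap \<sigma>) (gmap \<sigma>) (hmap \<sigma>) (imap \<sigma>) \<Gamma> M N
            \<and> coupling_cost (Qset \<sigma>) d (fmap \<sigma>) (hmap \<sigma>) = (SUP x. d x (\<sigma> x)))
    \<and> (\<forall>N :: ('a, 'k) pmodule. is_module UNIV (\<le>) N \<longrightarrow>
          galois_coupling (Qset \<sigma>) (Qle \<sigma>) (fmap \<sigma>) (gmap \<sigma>) (hmap \<sigma>) (imap \<sigma>)
            (pullback (hmap \<sigma>) N) (pullback \<sigma> N) N)"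
proof -
  note mo = assms(2) and ex = assms(3)
  have fin: "finite (Qset \<sigma>)" unfolding Qset_def by simp
  have dsym: "d x y = d y x" for x y using assms(1) unfolding is_metric_def by blast
  have img: "(\<lambda>q. d (fmap \<sigma> q) (hmap \<sigma> q)) ` Qset \<sigma> = range (\<lambda>x. d x (\<sigma> x))"
  proof -
    have "(\<lambda>q. d (fmap \<sigma> q) (hmap \<sigma> q)) (qcls \<sigma> u) = d (fst u) (\<sigma> (fst u))" for u
      using fmap_qcls[OF mo ex] hmap_qcls[OF mo ex] dsym by simp
    then show ?thesis unfolding Qset_def image_image
      by (auto simp: image_iff)
  qed
  have cost: "coupling_cost (Qset \<sigma>) d (fmap \<sigma>) (hmap \<sigma>) = (SUP x. d x (\<sigma> x))"
    unfolding coupling_cost_def using img by simp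
  have last: "galois_coupling (Qset \<sigma>) (Qle \<sigma>) (fmap \<sigma>) (gmap \<sigma>) (hmap \<sigma>) (imap \<sigma>)
            (pullback (hmap \<sigma>) N) (pullback \<sigma> N) N" if N: "is_module UNIV (\<le>) N" for N :: "('a, 'k::field) pmodule"
  proof -
    have hm: "q \<in> Qset \<sigma> \<Longrightarrow> q' \<in> Qset \<sigma> \<Longrightarrow> Qle \<sigma> q q' \<Longrightarrow> hmap \<sigma> q \<le> hmap \<sigma> q'" for q q'
      using gi2[OF mo ex] unfolding galois_insertion_def by blast
    have modG: "is_module (Qset \<sigma>) (Qle \<sigma>) (pullback (hmap \<sigma>) N)"
      using N hm unfolding is_module_def pullback_def by (auto intro: order_trans)
    have hg: "hmap \<sigma> (gmap \<sigma> x) = \<sigma> x" for x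
      unfolding gmap_def using hmap_qcls[OF mo ex] by simp
    have hi: "hmap \<sigma> (imap \<sigma> x) = x" for x
      unfolding imap_def using hmap_qcls[OF mo ex] by simp
    have e1: "pullback (gmap \<sigma>) (pullback (hmap \<sigma>) N) = pullback \<sigma> N"
      unfolding pullback_def using hg by (simp add: comp_def)
    have e2: "pullback (imap \<sigma>) (pullback (hmap \<sigma>) N) = N"
      unfolding pullback_def using hi by (simp add: comp_def)
    have Ns: "is_module UNIV (\<le>) (pullback \<sigma> N)"
      using N sle[OF mo ex] unfolding is_module_def pullback_def by auto
    show ?thesis unfolding galois_coupling_def e1 e2
      using fin po[OF mo ex] gi1[OF mo ex] gi2[OF mo ex] modG mod_iso_refl[OF Ns] mod_iso_refl[OF N]
      by blast
  qed
  have P1: "preorder_rel (qhle \<sigma>)" unfolding preorder_rel_def using qrefl[OF mo ex] qtrans[OF mo ex] by blast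
  have P2: "\<forall>x. fmap \<sigma> (qcls \<sigma> (x, False)) = x \<and> fmap \<sigma> (qcls \<sigma> (x, True)) = \<sigma> x"
    using fmap_qcls[OF mo ex] by simp
  have P3: "\<forall>x. hmap \<sigma> (qcls \<sigma> (x, False)) = \<sigma> x \<and> hmap \<sigma> (qcls \<sigma> (x, True)) = x"
    using hmap_qcls[OF mo ex] by simp
  have P4: "\<forall>(M :: ('a, 'k::field) pmodule) (N :: ('a, 'k) pmodule) (\<Gamma> :: (('a \<times> bool) set, 'k) pmodule).
          is_module UNIV (\<le>) M \<and> is_module UNIV (\<le>) N \<and> is_module (Qset \<sigma>) (Qle \<sigma>) \<Gamma>
          \<and> mod_iso UNIV (\<le>) (pullback (gmap \<sigma>) \<Gamma>) M \<and> mod_iso UNIV (\<le>) (pullback (imap \<sigma>) \<Gamma>) N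
          \<longrightarrow> galois_coupling (Qset \<sigma>) (Qle \<sigma>) (fmap \<sigma>) (gmap \<sigma>) (hmap \<sigma>) (imap \<sigma>) \<Gamma> M N
            \<and> coupling_cost (Qset \<sigma>) d (fmap \<sigma>) (hmap \<sigma>) = (SUP x. d x (\<sigma> x))"
    unfolding galois_coupling_def using fin po[OF mo ex] gi1[OF mo ex] gi2[OF mo ex] cost by blast
  have P5: "\<forall>N :: ('a, 'k) pmodule. is_module UNIV (\<le>) N \<longrightarrow>
          galois_coupling (Qset \<sigma>) (Qle \<sigma>) (fmap \<sigma>) (gmap \<sigma>) (hmap \<sigma>) (imap \<sigma>)
            (pullback (hmap \<sigma>) N) (pullback \<sigma> N) N" using last by blast
  have P6: "\<forall>x i. qcls \<sigma> (x, i) = (if \<sigma> x = x then {(x, False), (x, True)} else {(x, i)})"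
    using qcls_expl[OF mo ex] by blast
  have P7: "\<forall>u v. Qle \<sigma> (qcls \<sigma> u) (qcls \<sigma> v) \<longleftrightarrow> qhle \<sigma> u v" using Qle_iff[OF mo ex] by blast
  show ?thesis
    apply (intro conjI)
    apply (rule P1) apply (rule P6) apply (rule fin) apply (rule po[OF mo ex]) apply (rule P7)
    apply (rule P2) apply (rule gi1[OF mo ex]) apply (rule P3) apply (rule gi2[OF mo ex])
    apply (rule P4) apply (rule P5) done
qed

end
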